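(* Let $C$ and $D$ be $R$-linear codes of length $n$, and let $\tilde C\in\{C,C^\perp\}$ and $\tilde D\in\{D,D^\perp\}$. Then \[ \mathrm{CJ}^{\mathrm{av}}_{\tilde C,\tilde D}(x_{ij}\ \text{with}\ i,j\in K)=\frac{1}{|C|^{\delta(C,\tilde C)}\,|D|^{\delta(D,\tilde D)}}\;\Big(T_R^{\delta(C,\tilde C)}\otimes T_R^{\delta(D,\tilde D)}\Big)\,\mathrm{CJ}^{\mathrm{av}}_{C,D}(x_{ij}). \] Here $\delta(C,\tilde C)=0$ if $\tilde C=C$ and $\delta(C,\tilde C)=1$ if $\tilde C=C^\perp$, and similarly for $\delta(D,\tilde D)$. $T_R^0=I$ and $T_R^1=T_R$.
   Context: $R$ denotes either the finite field $\mathbb F_q$ ($q=p^f$, $p$ prime) or the ring $\mathbb Z_k$ of integers modulo $k\ge2$. The elements of $R$ are listed in a fixed order $0=\omega_0,\omega_1,\dots,\omega_{|R|-1}$, and $K=\{0,1,\dots,|R|-1\}$. An $R$-linear code of length $n$ is an $\mathbb F_q$-subspace of $\mathbb F_q^n$ (if $R=\mathbb F_q$) or an additive subgroup of $\mathbb Z_k^n$ (if $R=\mathbb Z_k$). The inner product is $u\cdot v=\sum_{i=1}^n u_iv_i$, and $C^\perp=\{v\in R^n: u\cdot v=0\ \forall u\in C\}$. For $u,v\in R^n$ and $(\alpha,\beta)\in R^2$, set $\eta_{\alpha\beta}(u,v)=\#\{i: (u_i,v_i)=(\alpha,\beta)\}$. The complete joint weight enumerator is \[ \mathrm{CJE}_{C,D}(x_{ij})=\sum_{u\in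 C,v\in D}\prod_{i,j=0}^{|R|-1}x_{ij}^{\eta_{\omega_i\omega_j}(u,v)}, \] where the $x_{ij}$ are indeterminates. For $\sigma\in S_n$ (the symmetric group on $\{1,\dots,n\}$) and $u\in R^n$, let $u^\sigma=(u_{\sigma(1)},\dots,u_{\sigma(n)})$ and $C^\sigma=\{u^\sigma:u\in C\}$. The average complete joint weight enumerator is \[ \mathrm{CJ}^{\mathrm{av}}_{C,D}(x_{ij})=\frac1{n!}\sum_{\sigma\in S_n}\mathrm{CJE}_{C^\sigma,D}(x_{ij}). \] The character $\chi:R\to\mathbb C^\times$ is defined as follows. - If $R=\mathbb Z_k$, then $\chi(\alpha)=e^{2\pi i\alpha/k}$. - If $R=\mathbb F_q$, fix a root $\lambda$ of a primitive irreducible polynomial of degree $f$ over $\mathbb F_p$, and write $\alpha=\alpha_0+\alpha_1\lambda+\dots+\alpha_{f-1}\lambda^{f-1}$ with $\alpha_i\in\mathbb F_p$. Then $\chi(\alpha)=e^{2\pi i\alpha_0/p}$. $T_R=(\chi(\omega_a\omega_b))_{a,b\in K}$. For matrices $A,B$ indexed by $K$, the operator $A\otimes B$ acts on a polynomial in the $x_{ij}$ by the substitution \[ x_{ij}\mapsto\sum_{k,l\in K}A_{ik}B_{jl}\,x_{kl}. \] *)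

theory Defs
  imports Complex_Main "HOL-Combinatorics.Permutations" "HOL-Computational_Algebra.Primes"
begin

text \<open>R is a finite commutative ring 'r. Case Z_k: the canonical map from
  {0..<k} to R is a bijection (so R is Z_k with its own arithmetic), and
  chi(a) = exp(2 pi i a / k).\<close>
definition is_Zk_char :: "('r::{finite,comm_ring_1} \<Rightarrow> complex) \<Rightarrow> bool" where
  "is_Zk_char \<chi> \<longleftrightarrow>
     (\<exists>k::nat. k \<ge> 2 \<and> bij_betw (of_nat :: nat \<Rightarrow> 'r) {0..<k} UNIV \<and>
        (\<forall>a<k. \<chi> (of_nat a) = exp (2 * pi * \<i> * of_nat a / of_nat k)))"

text \<open>Root of a primitive irreducible polynomial of degree f over F_p, in F_q:
  a primitive element, i.e. a generator of the multiplicative group.\<close>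
definition primitive_elem :: "'r::{finite,comm_ring_1} \<Rightarrow> bool" where
  "primitive_elem l \<longleftrightarrow> (\<forall>x::'r. x \<noteq> 0 \<longrightarrow> (\<exists>m::nat. x = l ^ m))"

definition is_Fq_char :: "('r::{finite,comm_ring_1} \<Rightarrow> complex) \<Rightarrow> bool" where
  "is_Fq_char \<chi> \<longleftrightarrow>
     (\<exists>(p::nat) (f::nat) (l::'r). prime p \<and> f \<ge> 1 \<and> card (UNIV :: 'r set) = p ^ f \<and>
        (\<forall>x::'r. x \<noteq> 0 \<longrightarrow> (\<exists>y. x * y = 1)) \<and>
        (of_nat p :: 'r) = 0 \<and> primitive_elem l \<and>
        (\<forall>(c::nat \<Rightarrow> nat) (\<alpha>::'r). (\<forall>i<f. c i < p) \<and>
            \<alpha> = (\<Sum>i<f. of_nat (c i) * l ^ i) \<longrightarrow>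
            \<chi> \<alpha> = exp (2 * pi * \<i> * of_nat (c 0) / of_nat p)))"

text \<open>Vectors of length n: functions nat => R vanishing from index n on
  (coordinates 0..n-1).\<close>
definition vecs :: "nat \<Rightarrow> (nat \<Rightarrow> 'r::comm_ring_1) set" where
  "vecs n = {u. \<forall>i\<ge>n. u i = 0}"

definition linear_code :: "nat \<Rightarrow> (nat \<Rightarrow> 'r::comm_ring_1) set \<Rightarrow> bool" where
  "linear_code n C \<longleftrightarrow> C \<subseteq> vecs n \<and> (\<lambda>_. 0) \<in> C \<and>
     (\<forall>u\<in>C. \<forall>v\<in>C. (\<lambda>i. u i + v i) \<in> C) \<and>
     (\<forall>u\<in>C. (\<lambda>i. - u i) \<in> C) \<and>
     (\<forall>a. \<forall>u\<in>C. (\<lambda>i. a * u i) \<in> C)"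

definition inner :: "nat \<Rightarrow> (nat \<Rightarrow> 'r::comm_ring_1) \<Rightarrow> (nat \<Rightarrow> 'r) \<Rightarrow> 'r" where
  "inner n u v = (\<Sum>i<n. u i * v i)"

definition dual :: "nat \<Rightarrow> (nat \<Rightarrow> 'r::comm_ring_1) set \<Rightarrow> (nat \<Rightarrow> 'r) set" where
  "dual n C = {v \<in> vecs n. \<forall>u\<in>C. inner n u v = 0}"

section \<open>Enumerators (polynomials represented by their evaluation functions)\<close>

definition eta :: "nat \<Rightarrow> 'r \<Rightarrow> 'r \<Rightarrow> (nat \<Rightarrow> 'r) \<Rightarrow> (nat \<Rightarrow> 'r) \<Rightarrow> nat" where
  "eta n a b u v = card {i. i < n \<and> u i = a \<and> v i = b}"

definition CJE :: "nat \<Rightarrow> (nat \<Rightarrow> 'r::finite) set \<Rightarrow> (nat \<Rightarrow> 'r) set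
                    \<Rightarrow> ('r \<Rightarrow> 'r \<Rightarrow> complex) \<Rightarrow> complex" where
  "CJE n C D x = (\<Sum>u\<in>C. \<Sum>v\<in>D. \<Prod>a\<in>UNIV. \<Prod>b\<in>UNIV. x a b ^ eta n a b u v)"

definition perm_code :: "(nat \<Rightarrow> nat) \<Rightarrow> (nat \<Rightarrow> 'r) set \<Rightarrow> (nat \<Rightarrow> 'r) set" where
  "perm_code \<sigma> C = (\<lambda>u. u \<circ> \<sigma>) ` C"

definition CJav :: "nat \<Rightarrow> (nat \<Rightarrow> 'r::finite) set \<Rightarrow> (nat \<Rightarrow> 'r) set
                    \<Rightarrow> ('r \<Rightarrow> 'r \<Rightarrow> complex) \<Rightarrow> complex" where
  "CJav n C D x = (1 / of_nat (fact n)) *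
     (\<Sum>\<sigma>\<in>{\<sigma>. \<sigma> permutes {..<n}}. CJE n (perm_code \<sigma> C) D x)"

definition T_mat :: "('r::comm_ring_1 \<Rightarrow> complex) \<Rightarrow> 'r \<Rightarrow> 'r \<Rightarrow> complex" where
  "T_mat \<chi> a b = \<chi> (a * b)"

definition id_mat :: "'r \<Rightarrow> 'r \<Rightarrow> complex" where
  "id_mat a b = (if a = b then 1 else 0)"

text \<open>T_R^0 = I, T_R^1 = T_R (the boolean is delta = 1).\<close>
definition T_pow :: "('r::comm_ring_1 \<Rightarrow> complex) \<Rightarrow> bool \<Rightarrow> 'r \<Rightarrow> 'r \<Rightarrow> complex" where
  "T_pow \<chi> d = (if d then T_mat \<chi> else id_mat)"

text \<open>(A (x) B) P evaluated at x equals P evaluated at x' with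
  x'_ij = sum_kl A_ik B_jl x_kl.\<close>
definition tsubst :: "('r::finite \<Rightarrow> 'r \<Rightarrow> complex) \<Rightarrow> ('r \<Rightarrow> 'r \<Rightarrow> complex)
                      \<Rightarrow> ('r \<Rightarrow> 'r \<Rightarrow> complex) \<Rightarrow> ('r \<Rightarrow> 'r \<Rightarrow> complex)" where
  "tsubst A B x = (\<lambda>i j. \<Sum>k\<in>UNIV. \<Sum>l\<in>UNIV. A i k * B j l * x k l)"

definition delta :: "bool \<Rightarrow> nat" where
  "delta d = (if d then 1 else 0)"

end

theory Submission
  imports Defs "HOL-Library.FuncSet"
begin

lemma finite_vecs: "finite (vecs n :: (nat \<Rightarrow> 'r::{finite,comm_ring_1}) set)"
proof -
  have "vecs n = {f::nat\<Rightarrow>'r. \<forall>x. (x \<in> {..<n} \<longrightarrow> f x \<in> UNIV) \<and> (x \<notin> {..<n} \<longrightarrow> f x = 0)}"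
    by (auto simp: vecs_def)
  then show ?thesis using finite_set_of_finite_funs[of "{..<n}" "UNIV::'r set" 0] by simp
qed

lemma code_finite: "linear_code n C \<Longrightarrow> finite (C :: (nat \<Rightarrow> 'r::{finite,comm_ring_1}) set)"
  by (meson finite_subset finite_vecs linear_code_def)

lemma code_card_pos: "linear_code n C \<Longrightarrow> card (C :: (nat \<Rightarrow> 'r::{finite,comm_ring_1}) set) > 0"
  using code_finite[of n C] by (auto simp: linear_code_def card_gt_0_iff)

lemma sum_vecs_prod:
  fixes g :: "nat \<Rightarrow> 'r::{finite,comm_ring_1} \<Rightarrow> 'c::comm_semiring_1"
  shows "(\<Prod>i<n. \<Sum>k\<in>UNIV. g i k) = (\<Sum>w\<in>vecs n. \<Prod>i<n. g i (w i))"
proof -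
  have "(\<Prod>i<n. \<Sum>k\<in>UNIV. g i k) = (\<Sum>w\<in>PiE {..<n} (\<lambda>_. UNIV). \<Prod>i<n. g i (w i))"
    by (rule prod_sum_PiE) auto
  also have "\<dots> = (\<Sum>w\<in>vecs n. \<Prod>i<n. g i (w i))"
    by (rule sum.reindex_bij_witness[of _ "\<lambda>w i. if i < n then w i else undefined"
          "\<lambda>w i. if i < n then w i else 0"])
       (auto simp: vecs_def PiE_def extensional_def fun_eq_iff intro!: prod.cong)
  finally show ?thesis .
qed

lemma eta_prod:
  fixes x :: "'r::finite \<Rightarrow> 'r \<Rightarrow> 'c::comm_monoid_mult"
  shows "(\<Prod>a\<in>UNIV. \<Prod>b\<in>UNIV. x a b ^ eta n a b u v) = (\<Prod>i<n. x (u i) (v i))"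
proof -
  have "(\<Prod>i<n. x (u i) (v i)) = (\<Prod>ab\<in>UNIV. \<Prod>i\<in>{i. i \<in> {..<n} \<and> (u i, v i) = ab}. x (u i) (v i))"
    by (rule prod.group[symmetric]) auto
  also have "\<dots> = (\<Prod>ab\<in>UNIV. x (fst ab) (snd ab) ^ eta n (fst ab) (snd ab) u v)"
  proof (rule prod.cong[OF refl])
    fix ab :: "'r \<times> 'r"
    have "(\<Prod>i\<in>{i. i \<in> {..<n} \<and> (u i, v i) = ab}. x (u i) (v i)) =
          (\<Prod>i\<in>{i. i \<in> {..<n} \<and> (u i, v i) = ab}. x (fst ab) (snd ab))"
      by (rule prod.cong) auto
    also have "\<dots> = x (fst ab) (snd ab) ^ eta n (fst ab) (snd ab) u v"
      by (simp add: eta_def) (metis (mono_tags, lifting) Collect_cong fst_conv prod.collapse snd_conv)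
    finally show "(\<Prod>i\<in>{i. i \<in> {..<n} \<and> (u i, v i) = ab}. x (u i) (v i)) = \<dots>" .
  qed
  also have "\<dots> = (\<Prod>a\<in>UNIV. \<Prod>b\<in>UNIV. x a b ^ eta n a b u v)"
    by (simp add: prod.cartesian_product case_prod_beta)
  finally show ?thesis by simp
qed

lemma CJE_alt: "CJE n C D x = (\<Sum>u\<in>C. \<Sum>v\<in>D. \<Prod>i<n. x (u i) (v i))"
  by (simp add: CJE_def eta_prod)


lemma exp_period:
  assumes k: "k > 0"
  shows "exp (2 * pi * \<i> * of_nat (m mod k) / of_nat k) = exp (2 * pi * \<i> * of_nat m / of_nat k)"
proof -
  have m: "m = m mod k + k * (m div k)" by simp
  have "(2 * pi * \<i> * of_nat m / of_nat k :: complex) =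
        2 * pi * \<i> * of_nat (m mod k) / of_nat k + of_nat (m div k) * (2 * of_real pi * \<i>)"
  proof -
    have mm: "(of_nat m::complex) = of_nat (m mod k) + of_nat k * of_nat (m div k)"
      by (metis m of_nat_add of_nat_mult)
    show ?thesis using k by (subst mm) (simp add: field_simps)
  qed
  then have "exp (2 * pi * \<i> * of_nat m / of_nat k :: complex) =
        exp (2 * pi * \<i> * of_nat (m mod k) / of_nat k) * exp (2 * of_real pi * \<i>) ^ (m div k)"
    by (simp add: exp_add exp_of_nat_mult)
  then show ?thesis by simp
qed

lemma exp_ne1:
  assumes "0 < a" "a < k"
  shows "exp (2 * pi * \<i> * of_nat a / of_nat k) \<noteq> 1"
proof
  assume h: "exp (2 * pi * \<i> * of_nat a / of_nat k) = 1"
  have "exp (2 * pi * \<i> * of_nat a / of_nat k) = cis (2 * pi * a / k)"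
    by (simp add: cis_conv_exp mult_ac)
  then have "Re (cis (2 * pi * a / k)) = 1" using h by simp
  then have "cos (2 * pi * a / k) = 1" by simp
  then obtain z :: int where z: "2 * pi * a / k = real_of_int z * 2 * pi" using cos_one_2pi_int by blast
  have kpos: "real k > 0" using assms by simp
  then have "real a = real_of_int z * real k" using z by (simp add: field_simps)
  moreover have "0 < real a" "real a < real k" using assms by auto
  ultimately have a1: "0 < real_of_int z * real k" "real_of_int z * real k < 1 * real k" by simp_all
  have "0 < real_of_int z" using a1(1) kpos by (simp add: zero_less_mult_iff)
  moreover have "real_of_int z < 1" using a1(2) kpos by (auto simp: mult_less_cancel_right)
  ultimately have "0 < real_of_int z" "real_of_int z < 1" by auto
  then have "0 < z" "z < 1" by simp_all
  then show False by simp
qed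


lemma lc_add: "linear_code n C \<Longrightarrow> u \<in> C \<Longrightarrow> v \<in> C \<Longrightarrow> (\<lambda>i. u i + v i) \<in> C"
  unfolding linear_code_def by blast
lemma lc_neg: "linear_code n C \<Longrightarrow> u \<in> C \<Longrightarrow> (\<lambda>i. - u i) \<in> C"
  unfolding linear_code_def by blast
lemma lc_smult: "linear_code n C \<Longrightarrow> u \<in> C \<Longrightarrow> (\<lambda>i. a * u i) \<in> C"
  unfolding linear_code_def by blast
lemma lc_vecs: "linear_code n C \<Longrightarrow> u \<in> C \<Longrightarrow> u \<in> vecs n"
  unfolding linear_code_def by blast

locale addchar =
  fixes \<chi> :: "'r::{finite,comm_ring_1} \<Rightarrow> complex"
  assumes add: "\<And>a b. \<chi> (a + b) = \<chi> a * \<chi> b"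
    and nondeg: "\<And>t. t \<noteq> 0 \<Longrightarrow> \<exists>b. \<chi> (b * t) \<noteq> 1"
    and chi0: "\<chi> 0 = 1"
begin

lemma chi_sum: "finite I \<Longrightarrow> \<chi> (\<Sum>i\<in>I. f i) = (\<Prod>i\<in>I. \<chi> (f i))"
  by (induction I rule: finite_induct) (auto simp: chi0 add)

lemma orth:
  assumes C: "linear_code n C" and v: "v \<in> vecs n"
  shows "(\<Sum>u\<in>C. \<chi> (inner n u v)) = (if v \<in> dual n C then of_nat (card C) else 0)"
proof (cases "v \<in> dual n C")
  case True
  then have "\<And>u. u \<in> C \<Longrightarrow> \<chi> (inner n u v) = 1" by (auto simp: dual_def chi0)
  then show ?thesis using True by simp
next
  case False
  then obtain u0 where u0: "u0 \<in> C" "inner n u0 v \<noteq> 0" using v by (auto simp: dual_def)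
  then obtain b where b: "\<chi> (b * inner n u0 v) \<noteq> 1" using nondeg by blast
  define u1 where "u1 = (\<lambda>i. b * u0 i)"
  have u1C: "u1 \<in> C" using lc_smult[OF C u0(1)] by (simp add: u1_def)
  have in1: "inner n u1 v = b * inner n u0 v"
    by (simp add: inner_def u1_def sum_distrib_left mult.assoc)
  have inadd: "inner n (\<lambda>i. u i + u1 i) v = inner n u v + inner n u1 v" for u
    by (simp add: inner_def distrib_right sum.distrib)
  let ?S = "\<Sum>u\<in>C. \<chi> (inner n u v)"
  have "?S = (\<Sum>u\<in>C. \<chi> (inner n (\<lambda>i. u i + u1 i) v))"
  proof (rule sum.reindex_bij_witness[of _ "\<lambda>u i. u i + u1 i" "\<lambda>u i. u i - u1 i"])
    fix u assume "u \<in> C"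
    then show "(\<lambda>i. u i + u1 i) \<in> C" using lc_add[OF C _ u1C] by simp
  next
    fix u assume "u \<in> C"
    have "(\<lambda>i. - u1 i) \<in> C" using lc_neg[OF C u1C] .
    then have "(\<lambda>i. u i + - u1 i) \<in> C" using lc_add[OF C \<open>u \<in> C\<close>] by blast
    then show "(\<lambda>i. u i - u1 i) \<in> C" by simp
  qed (simp_all add: fun_eq_iff)
  also have "\<dots> = \<chi> (inner n u1 v) * ?S"
    by (simp add: inadd add sum_distrib_left mult.commute)
  finally have "(1 - \<chi> (inner n u1 v)) * ?S = 0" by (simp add: algebra_simps)
  then have "?S = 0" using b in1 by auto
  then show ?thesis using False by simp
qed

lemma prod_chi: "(\<Prod>i<n. \<chi> (u i * w i)) = \<chi> (inner n u w)"
  by (simp add: inner_def chi_sum)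

lemma alpha:
  assumes C: "linear_code n C" and w: "w \<in> vecs n"
  shows "(\<Sum>u\<in>C. \<Prod>i<n. T_pow \<chi> d (u i) (w i)) =
         (if w \<in> (if d then dual n C else C) then of_nat (card C ^ delta d) else 0)"
proof (cases d)
  case True
  then show ?thesis using orth[OF C w] by (simp add: T_pow_def T_mat_def prod_chi delta_def)
next
  case False
  have "(\<Prod>i<n. id_mat (u i) (w i)) = (if u = w then 1 else 0)" if "u \<in> C" for u
  proof -
    have uv: "u \<in> vecs n" using lc_vecs[OF C that] .
    show ?thesis
    proof (cases "u = w")
      case True then show ?thesis by (simp add: id_mat_def)
    next
      case False
      then obtain i where "u i \<noteq> w i" by (auto simp: fun_eq_iff)
      have "i < n"
      proof (rule ccontr)
        assume "\<not> i < n"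
        then have "u i = 0" "w i = 0" using uv w by (auto simp: vecs_def)
        then show False using \<open>u i \<noteq> w i\<close> by simp
      qed
      then have "\<exists>i\<in>{..<n}. id_mat (u i) (w i) = (0::complex)" using \<open>u i \<noteq> w i\<close>
        by (auto simp: id_mat_def)
      then have "(\<Prod>i<n. id_mat (u i) (w i)) = (0::complex)" by (intro prod_zero) auto
      then show ?thesis using False by simp
    qed
  qed
  then have "(\<Sum>u\<in>C. \<Prod>i<n. id_mat (u i) (w i)) = (\<Sum>u\<in>C. if u = w then 1 else 0)"
    by (intro sum.cong) simp_all
  also have "\<dots> = (if w \<in> C then 1 else 0)"
    using code_finite[OF C] by (simp add: sum.delta')
  finally show ?thesis using False by (simp add: T_pow_def delta_def)
qed

lemma swap4: "(\<Sum>u\<in>A. \<Sum>v\<in>B. \<Sum>w\<in>W. \<Sum>z\<in>Z. F u v w z) = (\<Sum>w\<in>W. \<Sum>z\<in>Z. \<Sum>u\<in>A. \<Sum>v\<in>B. (F u v w z::complex))"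
proof -
  have "(\<Sum>u\<in>A. \<Sum>v\<in>B. \<Sum>w\<in>W. \<Sum>z\<in>Z. F u v w z) = (\<Sum>u\<in>A. \<Sum>w\<in>W. \<Sum>v\<in>B. \<Sum>z\<in>Z. F u v w z)"
    by (rule sum.cong[OF refl], rule sum.swap)
  also have "\<dots> = (\<Sum>w\<in>W. \<Sum>u\<in>A. \<Sum>v\<in>B. \<Sum>z\<in>Z. F u v w z)"
    by (rule sum.swap)
  also have "\<dots> = (\<Sum>w\<in>W. \<Sum>u\<in>A. \<Sum>z\<in>Z. \<Sum>v\<in>B. F u v w z)"
    by (rule sum.cong[OF refl], rule sum.cong[OF refl], rule sum.swap)
  also have "\<dots> = (\<Sum>w\<in>W. \<Sum>z\<in>Z. \<Sum>u\<in>A. \<Sum>v\<in>B. F u v w z)"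
    by (rule sum.cong[OF refl], rule sum.swap)
  finally show ?thesis .
qed

lemma ind_sum:
  fixes S T :: "(nat \<Rightarrow> 'r) set"
  assumes S: "S \<subseteq> vecs n" and T: "T \<subseteq> vecs n"
  shows "(\<Sum>w\<in>vecs n. \<Sum>z\<in>vecs n. (if w \<in> S then a else 0) * (if z \<in> T then b else 0) * P w z) =
    (\<Sum>w\<in>S. \<Sum>z\<in>T. a * b * (P w z :: complex))"
proof -
  have r: "(\<Sum>w\<in>vecs n. if w \<in> S' then f w else 0) = sum f S'" if "S' \<subseteq> vecs n" for S' :: "(nat \<Rightarrow> 'r) set" and f :: "(nat \<Rightarrow> 'r) \<Rightarrow> complex"
    using that sum.inter_restrict[OF finite_vecs, where g = f and B = S', symmetric] by (simp add: Int_absorb1)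
  have c: "(\<Sum>z\<in>A. if c then g z else 0) = (if c then sum g A else (0::complex))" for A c g
    by simp
  have "(\<Sum>w\<in>vecs n. \<Sum>z\<in>vecs n. (if w \<in> S then a else 0) * (if z \<in> T then b else 0) * P w z) =
     (\<Sum>w\<in>vecs n. \<Sum>z\<in>vecs n. if w \<in> S then (if z \<in> T then a * b * P w z else 0) else 0)"
    by (intro sum.cong refl) simp
  also have "\<dots> = (\<Sum>w\<in>vecs n. if w \<in> S then (\<Sum>z\<in>vecs n. if z \<in> T then a * b * P w z else 0) else 0)"
    by (simp only: c)
  also have "\<dots> = (\<Sum>w\<in>S. \<Sum>z\<in>T. a * b * P w z)"
    by (simp only: r[OF S] r[OF T])
  finally show ?thesis .
qed

lemma macwilliams:
  assumes C: "linear_code n C" and D: "linear_code n D"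
  shows "CJE n C D (tsubst (T_pow \<chi> dC) (T_pow \<chi> dD) x) =
     of_nat (card C ^ delta dC * card D ^ delta dD) *
     CJE n (if dC then dual n C else C) (if dD then dual n D else D) x"
proof -
  let ?A = "T_pow \<chi> dC" and ?B = "T_pow \<chi> dD"
  let ?C' = "if dC then dual n C else C" and ?D' = "if dD then dual n D else D"
  have exp: "(\<Prod>i<n. tsubst ?A ?B x (u i) (v i)) =
     (\<Sum>w\<in>vecs n. \<Sum>z\<in>vecs n. (\<Prod>i<n. ?A (u i) (w i)) * (\<Prod>i<n. ?B (v i) (z i)) * (\<Prod>i<n. x (w i) (z i)))"
    for u v
  proof -
    have "(\<Prod>i<n. tsubst ?A ?B x (u i) (v i)) =
        (\<Prod>i<n. \<Sum>k\<in>UNIV. (\<Sum>l\<in>UNIV. ?A (u i) k * ?B (v i) l * x k l))"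
      by (simp add: tsubst_def)
    also have "\<dots> = (\<Sum>w\<in>vecs n. \<Prod>i<n. \<Sum>l\<in>UNIV. ?A (u i) (w i) * ?B (v i) l * x (w i) l)"
      by (rule sum_vecs_prod)
    also have "\<dots> = (\<Sum>w\<in>vecs n. \<Sum>z\<in>vecs n. \<Prod>i<n. ?A (u i) (w i) * ?B (v i) (z i) * x (w i) (z i))"
      by (simp add: sum_vecs_prod)
    also have "\<dots> = (\<Sum>w\<in>vecs n. \<Sum>z\<in>vecs n. (\<Prod>i<n. ?A (u i) (w i)) * (\<Prod>i<n. ?B (v i) (z i)) * (\<Prod>i<n. x (w i) (z i)))"
      by (simp add: prod.distrib)
    finally show ?thesis .
  qed
  have "CJE n C D (tsubst ?A ?B x) =
     (\<Sum>u\<in>C. \<Sum>v\<in>D. \<Sum>w\<in>vecs n. \<Sum>z\<in>vecs n. (\<Prod>i<n. ?A (u i) (w i)) * (\<Prod>i<n. ?B (v i) (z i)) * (\<Prod>i<n. x (w i) (z i)))"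
    by (simp add: CJE_alt exp)
  also have "\<dots> = (\<Sum>w\<in>vecs n. \<Sum>z\<in>vecs n. (\<Sum>u\<in>C. \<Prod>i<n. ?A (u i) (w i)) * (\<Sum>v\<in>D. \<Prod>i<n. ?B (v i) (z i)) * (\<Prod>i<n. x (w i) (z i)))"
    by (subst swap4) (simp only: sum_distrib_left sum_distrib_right, rule sum.cong[OF refl], rule sum.cong[OF refl], rule sum.swap)
  also have "\<dots> = (\<Sum>w\<in>vecs n. \<Sum>z\<in>vecs n. (if w \<in> ?C' then of_nat (card C ^ delta dC) else 0) *
        (if z \<in> ?D' then of_nat (card D ^ delta dD) else 0) * (\<Prod>i<n. x (w i) (z i)))"
    by (intro sum.cong refl) (simp add: alpha[OF C] alpha[OF D])
  also have "\<dots> = (\<Sum>w\<in>?C'. \<Sum>z\<in>?D'. of_nat (card C ^ delta dC) * of_nat (card D ^ delta dD) * (\<Prod>i<n. x (w i) (z i)))"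
  proof -
    have sC: "?C' \<subseteq> vecs n" and sD: "?D' \<subseteq> vecs n"
      using C D unfolding dual_def linear_code_def by auto
    show ?thesis by (rule ind_sum[OF sC sD])
  qed
  also have "\<dots> = of_nat (card C ^ delta dC * card D ^ delta dD) * CJE n ?C' ?D' x"
    by (simp add: CJE_alt sum_distrib_left mult.assoc)
  finally show ?thesis .
qed

end

context
  fixes l :: "'r::{finite,comm_ring_1}" and p f :: nat
  assumes pp: "prime p" and f1: "f \<ge> 1" and cardR: "card (UNIV :: 'r set) = p ^ f"
    and inv: "\<forall>x::'r. x \<noteq> 0 \<longrightarrow> (\<exists>y. x * y = 1)"
    and charp: "(of_nat p :: 'r) = 0" and prim: "primitive_elem l"
begin

lemma p2: "p \<ge> 2" using pp by (simp add: prime_ge_2_nat)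

lemma ofint_red: "(of_int z :: 'r) = of_nat (nat (z mod int p))"
proof -
  have "(of_int z :: 'r) = of_int (z mod int p + int p * (z div int p))" by simp
  also have "\<dots> = of_int (z mod int p)" using charp by (simp only: of_int_add of_int_mult of_int_of_nat_eq) simp
  also have "\<dots> = of_nat (nat (z mod int p))" using p2 by simp
  finally show ?thesis .
qed

lemma red: "(of_nat m :: 'r) = of_nat (m mod p)"
proof -
  have "(of_nat m :: 'r) = of_nat (m mod p + p * (m div p))" by simp
  also have "\<dots> = of_nat (m mod p)" by (simp only: of_nat_add of_nat_mult charp) simp
  finally show ?thesis .
qed

lemma unit_nat:
  assumes "\<not> p dvd m"
  shows "\<exists>x. (of_nat m :: 'r) * of_nat x = 1"
proof -
  have "coprime (int m) (int p)" using assms pp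
    by (metis coprime_commute prime_imp_coprime prime_nat_iff_prime coprime_int_iff)
  then have g: "gcd (int m) (int p) = 1" by simp
  obtain u v where uv: "u * int m + v * int p = gcd (int m) (int p)" using bezout_int by blast
  then have "(of_int (u * int m + v * int p) :: 'r) = 1" using g by simp
  then have "(of_int u :: 'r) * of_nat m = 1" using charp by simp
  then have "(of_nat m :: 'r) * of_nat (nat (u mod int p)) = 1" by (simp add: ofint_red[symmetric] mult.commute)
  then show ?thesis by blast
qed

lemma nontriv: "(1::'r) \<noteq> 0"
proof
  assume h: "(1::'r) = 0"
  then have "\<And>x::'r. x = 0" by (metis mult_1 mult_zero_left)
  then have "(UNIV :: 'r set) = {0}" by auto
  then have "card (UNIV :: 'r set) = card {0::'r}" by (simp only:)
  then have "card (UNIV :: 'r set) = 1" by simp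
  moreover have "p ^ f \<ge> p ^ 1" using f1 p2 by (intro power_increasing) auto
  ultimately show False using cardR p2 by simp
qed

lemma nz_nat: "\<not> p dvd m \<Longrightarrow> (of_nat m :: 'r) \<noteq> 0"
  using unit_nat nontriv by force

lemma inj_nat: "a < p \<Longrightarrow> b < p \<Longrightarrow> (of_nat a :: 'r) = of_nat b \<Longrightarrow> a = b"
proof -
  have *: "a < b \<Longrightarrow> b < p \<Longrightarrow> (of_nat a :: 'r) = of_nat b \<Longrightarrow> False" for a b
  proof -
    assume ab: "a < b" "b < p" "(of_nat a :: 'r) = of_nat b"
    then have "(of_nat (b - a) :: 'r) = 0" by (simp add: of_nat_diff)
    moreover have "\<not> p dvd (b - a)" using ab by (metis diff_less dvd_imp_le gr0I less_imp_diff_less not_less zero_less_diff)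
    ultimately show False using nz_nat by blast
  qed
  assume "a < p" "b < p" "(of_nat a :: 'r) = of_nat b"
  then show "a = b" using *[of a b] *[of b a] by (metis linorder_neqE_nat)
qed

lemma neg_nat: "- (of_nat m :: 'r) = of_nat ((p - 1) * m)"
proof -
  have "(of_nat ((p - 1) * m) :: 'r) + of_nat m = of_nat ((p - 1) * m + m)" by simp
  also have "(p - 1) * m + m = p * m"
  proof -
    have "p - 1 + 1 = p" using p2 by simp
    then have "(p - 1) * m + 1 * m = p * m" by (metis add_mult_distrib)
    then show ?thesis by simp
  qed
  finally have "(of_nat ((p - 1) * m) :: 'r) + of_nat m = 0" using charp by simp
  then show ?thesis by (metis add_eq_0_iff2 minus_equation_iff)
qed

definition W :: "nat \<Rightarrow> 'r set" where
  "W e = {w. \<exists>g. w = (\<Sum>i<e. of_nat (g i) * l ^ i)}"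

lemma W_0: "0 \<in> W e"
  unfolding W_def by (rule CollectI, rule exI[of _ "\<lambda>_. 0"]) simp

lemma W_add: "a \<in> W e \<Longrightarrow> b \<in> W e \<Longrightarrow> a + b \<in> W e"
proof -
  assume "a \<in> W e" "b \<in> W e"
  then obtain g h where "a = (\<Sum>i<e. of_nat (g i) * l ^ i)" "b = (\<Sum>i<e. of_nat (h i) * l ^ i)"
    unfolding W_def by blast
  then have "a + b = (\<Sum>i<e. of_nat (g i + h i) * l ^ i)"
    by (simp add: sum.distrib distrib_right)
  then show ?thesis unfolding W_def by (intro CollectI exI[of _ "\<lambda>i. g i + h i"])
qed

lemma W_smul: "a \<in> W e \<Longrightarrow> of_nat m * a \<in> W e"
proof -
  assume "a \<in> W e"
  then obtain g where "a = (\<Sum>i<e. of_nat (g i) * l ^ i)"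
    unfolding W_def by blast
  then have "of_nat m * a = (\<Sum>i<e. of_nat (m * g i) * l ^ i)"
    by (simp add: sum_distrib_left mult.assoc)
  then show ?thesis unfolding W_def by (intro CollectI exI[of _ "\<lambda>i. m * g i"])
qed

lemma W_basis: "j < e \<Longrightarrow> l ^ j \<in> W e"
proof -
  assume j: "j < e"
  have "(\<Sum>i<e. of_nat (if i = j then 1 else 0) * l ^ i) = (\<Sum>i<e. if i = j then l ^ i else 0)"
    by (intro sum.cong) auto
  also have "\<dots> = l ^ j" using j by simp
  finally show ?thesis unfolding W_def by (intro CollectI exI[of _ "\<lambda>i. if i = j then 1 else 0"]) simp
qed

lemma W_sum: "finite I \<Longrightarrow> (\<And>i. i \<in> I \<Longrightarrow> F i \<in> W e) \<Longrightarrow> sum F I \<in> W e"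
  by (induction I rule: finite_induct) (auto intro: W_0 W_add)

lemma W_card: "card (W e) \<le> p ^ e"
proof -
  let ?P = "PiE {..<e} (\<lambda>_. {..<p})"
  let ?F = "\<lambda>g. (\<Sum>i<e. of_nat (g i) * l ^ i) :: 'r"
  have "W e \<subseteq> ?F ` ?P"
  proof
    fix w assume "w \<in> W e"
    then obtain g where g: "w = ?F g" unfolding W_def by blast
    let ?g = "restrict (\<lambda>i. g i mod p) {..<e}"
    have "?g \<in> ?P" using p2 by (simp add: restrict_PiE_iff)
    moreover have "?F ?g = ?F g"
    proof (rule sum.cong[OF refl])
      fix i assume "i \<in> {..<e}"
      then have "?g i = g i mod p" by simp
      then show "of_nat (?g i) * l ^ i = of_nat (g i) * l ^ i" using red[of "g i"] by simp
    qed
    ultimately show "w \<in> ?F ` ?P" using g by (intro image_eqI[of w ?F ?g]) simp_all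
  qed
  then have "card (W e) \<le> card (?F ` ?P)" by (intro card_mono finite_imageI finite_PiE) simp_all
  also have "\<dots> \<le> card ?P" by (rule card_image_le) (simp add: finite_PiE)
  also have "\<dots> = p ^ e" by (simp add: card_PiE)
  finally show ?thesis .
qed

lemma W_full:
  assumes le: "l ^ e \<in> W e"
  shows "W e = UNIV"
proof -
  have lm: "l * w \<in> W e" if wW: "w \<in> W e" for w
  proof -
    obtain g where g: "w = (\<Sum>i<e. of_nat (g i) * l ^ i)" using wW unfolding W_def by blast
    have "l * w = (\<Sum>i<e. of_nat (g i) * l ^ Suc i)"
      by (simp add: g sum_distrib_left mult_ac)
    also have "\<dots> \<in> W e"
    proof (rule W_sum)
      fix i assume "i \<in> {..<e}"
      then have "Suc i < e \<or> Suc i = e" by auto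
      then have "l ^ Suc i \<in> W e"
        using le W_basis by blast
      then show "of_nat (g i) * l ^ Suc i \<in> W e" by (rule W_smul)
    qed simp
    finally show ?thesis .
  qed
  have pw: "l ^ m \<in> W e" for m
  proof (induction m)
    case 0
    show ?case
    proof (cases "e = 0")
      case True then show ?thesis using le by simp
    next
      case False then show ?thesis using W_basis[of 0 e] by simp
    qed
  next
    case (Suc m)
    then show ?case using lm by simp
  qed
  show ?thesis
  proof
    show "UNIV \<subseteq> W e"
    proof
      fix x :: 'r
      show "x \<in> W e"
      proof (cases "x = 0")
        case True then show ?thesis using W_0 by simp
      next
        case False
        then obtain m where "x = l ^ m" using prim unfolding primitive_elem_def by blast
        then show ?thesis using pw by simp
      qed
    qed
  qed simp
qed

lemma rep_inj: "inj_on (\<lambda>c. (\<Sum>i<f. of_nat (c i) * l ^ i) :: 'r) (PiE {..<f} (\<lambda>_. {..<p}))"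
proof (rule inj_onI, rule ccontr)
  fix c d
  assume c: "c \<in> PiE {..<f} (\<lambda>_. {..<p})" and d: "d \<in> PiE {..<f} (\<lambda>_. {..<p})"
    and eq: "(\<Sum>i<f. of_nat (c i) * l ^ i) = ((\<Sum>i<f. of_nat (d i) * l ^ i) :: 'r)"
    and ne: "c \<noteq> d"
  define B where "B = {i. i < f \<and> c i \<noteq> d i}"
  have Bne: "B \<noteq> {}"
  proof
    assume "B = {}"
    then have "c i = d i" for i
    proof (cases "i < f")
      case True then show ?thesis using \<open>B = {}\<close> unfolding B_def by blast
    next
      case False then show ?thesis using PiE_arb[OF c] PiE_arb[OF d] by simp
    qed
    then show False using ne by blast
  qed
  have Bfin: "finite B" unfolding B_def by simp
  define e where "e = Max B"
  have eB: "e \<in> B" unfolding e_def using Bne Bfin by (rule Max_in[rotated])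
  then have ef: "e < f" and cde: "c e \<noteq> d e" unfolding B_def by auto
  have above: "c i = d i" if "i < f" "e < i" for i
  proof (rule ccontr)
    assume "c i \<noteq> d i"
    then have "i \<in> B" using that unfolding B_def by simp
    then have "i \<le> e" unfolding e_def using Bfin by simp
    then show False using that by simp
  qed
  define h where "h i = nat ((int (c i) - int (d i)) mod int p)" for i
  have hh: "(of_nat (h i) :: 'r) = of_nat (c i) - of_nat (d i)" for i
    using ofint_red[of "int (c i) - int (d i)"] by (simp add: h_def)
  have s0: "(\<Sum>i<f. of_nat (h i) * l ^ i) = (0::'r)"
    using eq by (simp add: hh left_diff_distrib sum_subtractf)
  have s1: "(\<Sum>i<Suc e. of_nat (h i) * l ^ i) = (0::'r)"
  proof -
    have "(\<Sum>i<Suc e. of_nat (h i) * l ^ i) = (\<Sum>i<f. of_nat (h i) * (l ^ i :: 'r))"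
    proof (rule sum.mono_neutral_left)
      show "\<forall>i\<in>{..<f} - {..<Suc e}. of_nat (h i) * l ^ i = (0::'r)"
        using above by (auto simp: hh)
    qed (use ef in auto)
    then show ?thesis using s0 by simp
  qed
  then have s2: "(\<Sum>i<e. of_nat (h i) * l ^ i) + of_nat (h e) * l ^ e = (0::'r)" by simp
  have cel: "c e < p" "d e < p" using c d ef by (auto simp: PiE_iff)
  have hnz: "(of_nat (h e) :: 'r) \<noteq> 0"
  proof
    assume "(of_nat (h e) :: 'r) = 0"
    then have "(of_nat (c e) :: 'r) = of_nat (d e)" using hh[of e] by simp
    then show False using inj_nat cel cde by blast
  qed
  have "\<not> p dvd h e"
  proof
    assume "p dvd h e"
    then obtain k where "h e = p * k" by blast
    then show False using hnz charp by simp
  qed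
  then obtain x where x: "(of_nat (h e) :: 'r) * of_nat x = 1" using unit_nat by blast
  have s3: "of_nat x * ((\<Sum>i<e. of_nat (h i) * l ^ i) + of_nat (h e) * l ^ e) = (0::'r)"
    using s2 by simp
  have "(\<Sum>i<e. of_nat (x * h i) * l ^ i) + l ^ e = (0::'r)"
  proof -
    have le1: "of_nat x * (of_nat (h e) * l ^ e) = (l ^ e :: 'r)"
      using x by (metis mult.assoc mult.commute mult_1)
    show ?thesis using s3 le1 by (simp add: distrib_left sum_distrib_left mult_ac)
  qed
  then have "l ^ e = - (\<Sum>i<e. of_nat (x * h i) * l ^ i)"
    by (simp add: eq_neg_iff_add_eq_0 add.commute)
  also have "\<dots> = (\<Sum>i<e. of_nat ((p - 1) * (x * h i)) * l ^ i)"
    unfolding sum_negf[symmetric]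
  proof (rule sum.cong[OF refl])
    fix i
    show "- (of_nat (x * h i) * l ^ i) = (of_nat ((p - 1) * (x * h i)) * l ^ i :: 'r)"
      using neg_nat[of "x * h i"] by (metis minus_mult_left)
  qed
  finally have "l ^ e \<in> W e" unfolding W_def by (intro CollectI exI[of _ "\<lambda>i. (p - 1) * (x * h i)"])
  then have "W e = UNIV" by (rule W_full)
  then have "card (UNIV :: 'r set) \<le> p ^ e" using W_card[of e] by simp
  moreover have "p ^ e < p ^ f" using ef p2 by (intro power_strict_increasing) auto
  ultimately show False using cardR by simp
qed

lemma span: "\<exists>c. (\<forall>i<f. c i < p) \<and> \<alpha> = (\<Sum>i<f. of_nat (c i) * l ^ i)"
proof -
  let ?P = "PiE {..<f} (\<lambda>_. {..<p})"
  let ?F = "\<lambda>c. (\<Sum>i<f. of_nat (c i) * l ^ i) :: 'r"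
  have "card (?F ` ?P) = card ?P" using rep_inj by (rule card_image)
  also have "\<dots> = p ^ f" by (simp add: card_PiE)
  finally have "card (?F ` ?P) = card (UNIV :: 'r set)" using cardR by simp
  then have eqU: "?F ` ?P = UNIV" by (intro card_eq_UNIV_imp_eq_UNIV) simp_all
  have "\<alpha> \<in> ?F ` ?P" by (simp only: eqU) simp
  then obtain c where cP: "c \<in> ?P" and ac: "\<alpha> = ?F c" by blast
  from cP have "\<forall>i<f. c i < p" by (simp add: PiE_iff)
  with ac show ?thesis by blast
qed

end

lemma zk_addchar:
  fixes \<chi> :: "'r::{finite,comm_ring_1} \<Rightarrow> complex"
  assumes "is_Zk_char \<chi>"
  shows "addchar \<chi>"
proof -
  obtain k :: nat where k2: "k \<ge> 2" and bij: "bij_betw (of_nat :: nat \<Rightarrow> 'r) {0..<k} UNIV"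
    and ch: "\<And>a. a < k \<Longrightarrow> \<chi> (of_nat a) = exp (2 * pi * \<i> * of_nat a / of_nat k)"
    using assms unfolding is_Zk_char_def by blast
  have inj: "inj_on (of_nat :: nat \<Rightarrow> 'r) {0..<k}" and surj: "(of_nat :: nat \<Rightarrow> 'r) ` {0..<k} = UNIV"
    using bij by (auto simp: bij_betw_def)
  have ok: "(of_nat k :: 'r) = 0"
  proof -
    obtain j where j: "j < k" "(of_nat k :: 'r) = of_nat j"
      using surj by (metis UNIV_I atLeastLessThan_iff imageE)
    have d: "(of_nat (k - j) :: 'r) = 0" using j by (simp add: of_nat_diff)
    show ?thesis
    proof (cases "j = 0")
      case True then show ?thesis using j by simp
    next
      case False
      then have "k - j \<in> {0..<k}" "(0::nat) \<in> {0..<k}" using j k2 by auto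
      with inj d have "k - j = 0" by (metis inj_on_def of_nat_0)
      then show ?thesis using j by simp
    qed
  qed
  have red: "(of_nat m :: 'r) = of_nat (m mod k)" for m
  proof -
    have "(of_nat m :: 'r) = of_nat (m mod k + k * (m div k))" by simp
    also have "\<dots> = of_nat (m mod k)" by (simp only: of_nat_add of_nat_mult ok) simp
    finally show ?thesis .
  qed
  have kpos: "k > 0" using k2 by simp
  have chall: "\<chi> (of_nat m) = exp (2 * pi * \<i> * of_nat m / of_nat k)" for m
    using ch[of "m mod k"] kpos red[of m] exp_period[OF kpos, of m] by simp
  have rep: "\<exists>a. r = (of_nat a :: 'r)" for r
    using surj by (metis UNIV_I imageE)
  show ?thesis
  proof
    fix a b :: 'r
    obtain a' b' where ab: "a = of_nat a'" "b = of_nat b'" using rep by blast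
    have "\<chi> (a + b) = \<chi> (of_nat (a' + b'))" using ab by simp
    also have "\<dots> = exp (2 * pi * \<i> * of_nat a' / of_nat k + 2 * pi * \<i> * of_nat b' / of_nat k)"
      by (subst chall) (simp add: add_divide_distrib distrib_left)
    also have "\<dots> = \<chi> a * \<chi> b" by (simp add: exp_add ab chall)
    finally show "\<chi> (a + b) = \<chi> a * \<chi> b" .
  next
    fix t :: 'r assume t: "t \<noteq> 0"
    obtain a where a: "a < k" "t = of_nat a" using surj by (metis UNIV_I atLeastLessThan_iff imageE)
    have "a > 0" using a t by (cases a) auto
    then have "\<chi> (1 * t) \<noteq> 1" using a chall exp_ne1 by simp
    then show "\<exists>b. \<chi> (b * t) \<noteq> 1" by blast
  next
    show "\<chi> 0 = 1" using chall[of 0] by simp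
  qed
qed

lemma fq_addchar:
  fixes \<chi> :: "'r::{finite,comm_ring_1} \<Rightarrow> complex"
  assumes "is_Fq_char \<chi>"
  shows "addchar \<chi>"
proof -
  obtain p f :: nat and l :: 'r where pp: "prime p" and f1: "f \<ge> 1" and cardR: "card (UNIV :: 'r set) = p ^ f"
    and inv: "\<forall>x::'r. x \<noteq> 0 \<longrightarrow> (\<exists>y. x * y = 1)" and charp: "(of_nat p :: 'r) = 0"
    and prim: "primitive_elem l"
    and ch: "\<forall>(c::nat \<Rightarrow> nat) (\<alpha>::'r). (\<forall>i<f. c i < p) \<and> \<alpha> = (\<Sum>i<f. of_nat (c i) * l ^ i) \<longrightarrow>
            \<chi> \<alpha> = exp (2 * pi * \<i> * of_nat (c 0) / of_nat p)"
    using assms unfolding is_Fq_char_def by blast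
  note sp = span[OF pp f1 cardR inv charp prim]
  note rd = red[OF pp f1 cardR inv charp prim]
  have p2: "p \<ge> 2" using pp by (simp add: prime_ge_2_nat)
  have chr: "\<chi> (\<Sum>i<f. of_nat (c i) * l ^ i) = exp (2 * pi * \<i> * of_nat (c 0) / of_nat p)"
    if "\<forall>i<f. c i < p" for c
    using ch that by blast
  show ?thesis
  proof
    fix a b :: 'r
    obtain c where c: "\<forall>i<f. c i < p" "a = (\<Sum>i<f. of_nat (c i) * l ^ i)" using sp by blast
    obtain d where d: "\<forall>i<f. d i < p" "b = (\<Sum>i<f. of_nat (d i) * l ^ i)" using sp by blast
    let ?e = "\<lambda>i. (c i + d i) mod p"
    have e1: "\<forall>i<f. ?e i < p" using p2 by simp
    have "a + b = (\<Sum>i<f. of_nat (?e i) * l ^ i)"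
      unfolding c d sum.distrib[symmetric]
    proof (rule sum.cong[OF refl])
      fix i
      show "of_nat (c i) * l ^ i + of_nat (d i) * l ^ i = of_nat (?e i) * l ^ i"
        using rd[of "c i + d i"] by (metis distrib_right of_nat_add)
    qed
    then have "\<chi> (a + b) = exp (2 * pi * \<i> * of_nat (?e 0) / of_nat p)" using chr[OF e1] by simp
    also have "\<dots> = exp (2 * pi * \<i> * of_nat (c 0 + d 0) / of_nat p)"
      using p2 exp_period[of p "c 0 + d 0"] by simp
    also have "\<dots> = exp (2 * pi * \<i> * of_nat (c 0) / of_nat p + 2 * pi * \<i> * of_nat (d 0) / of_nat p)"
      by (simp add: add_divide_distrib distrib_left)
    also have "\<dots> = \<chi> a * \<chi> b" using chr[OF c(1)] chr[OF d(1)] c(2) d(2) by (simp add: exp_add)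
    finally show "\<chi> (a + b) = \<chi> a * \<chi> b" .
  next
    fix t :: 'r assume t: "t \<noteq> 0"
    then obtain y where y: "t * y = 1" using inv by blast
    let ?c = "\<lambda>i::nat. if i = 0 then 1 else (0::nat)"
    have c1: "\<forall>i<f. ?c i < p" using p2 by simp
    have "(\<Sum>i<f. of_nat (?c i) * l ^ i) = (\<Sum>i<f. if i = 0 then 1 else (0::'r))"
      by (intro sum.cong) auto
    also have "\<dots> = 1" using f1 by simp
    finally have "\<chi> 1 = exp (2 * pi * \<i> * of_nat 1 / of_nat p)" using chr[OF c1] by simp
    also have "\<dots> \<noteq> 1" using exp_ne1[of 1 p] p2 by simp
    finally have "\<chi> (y * t) \<noteq> 1" using y by (simp add: mult.commute)
    then show "\<exists>b. \<chi> (b * t) \<noteq> 1" by blast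
  next
    have "(\<Sum>i<f. of_nat ((\<lambda>_. 0::nat) i) * l ^ i) = (0::'r)" by simp
    then show "\<chi> 0 = 1" using chr[of "\<lambda>_. 0"] p2 by simp
  qed
qed


lemma perm_vecs:
  assumes s: "\<sigma> permutes {..<n}" and u: "u \<in> vecs n"
  shows "u \<circ> \<sigma> \<in> vecs n"
proof -
  have "(u \<circ> \<sigma>) i = 0" if "i \<ge> n" for i
  proof -
    have "\<sigma> i = i" using permutes_not_in[OF s] that by simp
    then show ?thesis using u that by (simp add: vecs_def)
  qed
  then show ?thesis by (simp add: vecs_def)
qed

lemma perm_lc:
  assumes s: "\<sigma> permutes {..<n}" and C: "linear_code n C"
  shows "linear_code n (perm_code \<sigma> C)"
proof -
  have sub: "perm_code \<sigma> C \<subseteq> vecs n"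
  proof
    fix u assume uu: "u \<in> perm_code \<sigma> C"
    obtain u' where "u' \<in> C" "u = u' \<circ> \<sigma>" using uu unfolding perm_code_def by blast
    then show "u \<in> vecs n" using perm_vecs[OF s lc_vecs[OF C]] by simp
  qed
  have z: "(\<lambda>_. 0) \<in> perm_code \<sigma> C"
  proof -
    have "(\<lambda>_. 0) \<in> C" using C by (simp add: linear_code_def)
    then show ?thesis unfolding perm_code_def by (rule rev_image_eqI) (simp add: fun_eq_iff)
  qed
  have a: "(\<lambda>i. u i + v i) \<in> perm_code \<sigma> C" if hu: "u \<in> perm_code \<sigma> C" and hv: "v \<in> perm_code \<sigma> C" for u v
  proof -
    obtain u' where u': "u' \<in> C" "u = u' \<circ> \<sigma>" using hu unfolding perm_code_def by blast
    obtain v' where v': "v' \<in> C" "v = v' \<circ> \<sigma>" using hv unfolding perm_code_def by blast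
    have "(\<lambda>i. u' i + v' i) \<in> C" using lc_add[OF C u'(1) v'(1)] .
    then show ?thesis unfolding perm_code_def by (rule rev_image_eqI) (simp add: fun_eq_iff u'(2) v'(2))
  qed
  have ng: "(\<lambda>i. - u i) \<in> perm_code \<sigma> C" if hu: "u \<in> perm_code \<sigma> C" for u
  proof -
    obtain u' where u': "u' \<in> C" "u = u' \<circ> \<sigma>" using hu unfolding perm_code_def by blast
    have "(\<lambda>i. - u' i) \<in> C" using lc_neg[OF C u'(1)] .
    then show ?thesis unfolding perm_code_def by (rule rev_image_eqI) (simp add: fun_eq_iff u'(2))
  qed
  have sm: "(\<lambda>i. c * u i) \<in> perm_code \<sigma> C" if hu: "u \<in> perm_code \<sigma> C" for u c
  proof -
    obtain u' where u': "u' \<in> C" "u = u' \<circ> \<sigma>" using hu unfolding perm_code_def by blast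
    have "(\<lambda>i. c * u' i) \<in> C" using lc_smult[OF C u'(1)] .
    then show ?thesis unfolding perm_code_def by (rule rev_image_eqI) (simp add: fun_eq_iff u'(2))
  qed
  show ?thesis unfolding linear_code_def using sub z a ng sm by blast
qed

lemma perm_card:
  assumes s: "\<sigma> permutes {..<n}"
  shows "card (perm_code \<sigma> C) = card C"
  unfolding perm_code_def
proof (rule card_image, rule inj_onI)
  fix u v :: "nat \<Rightarrow> 'a" assume "u \<circ> \<sigma> = v \<circ> \<sigma>"
  then have "u \<circ> \<sigma> \<circ> inv \<sigma> = v \<circ> \<sigma> \<circ> inv \<sigma>" by simp
  then show "u = v" using permutes_inv_o(1)[OF s] by (simp add: o_assoc[symmetric])
qed

lemma perm_inner:
  assumes s: "\<sigma> permutes {..<n}"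
  shows "inner n (u \<circ> \<sigma>) v = inner n u (v \<circ> inv \<sigma>)"
proof -
  have "inner n u (v \<circ> inv \<sigma>) = (\<Sum>i<n. u i * v (inv \<sigma> i))" by (simp add: inner_def)
  also have "\<dots> = (\<Sum>i<n. u (\<sigma> i) * v (inv \<sigma> (\<sigma> i)))"
    using sum.permute[OF s, of "\<lambda>i. u i * v (inv \<sigma> i)"] by (simp add: o_def)
  also have "\<dots> = inner n (u \<circ> \<sigma>) v" by (simp add: inner_def permutes_inverses(2)[OF s])
  finally show ?thesis by simp
qed

lemma perm_dual:
  assumes s: "\<sigma> permutes {..<n}"
  shows "dual n (perm_code \<sigma> C) = perm_code \<sigma> (dual n C)"
proof
  have si: "inv \<sigma> permutes {..<n}" using s by (rule permutes_inv)
  show "dual n (perm_code \<sigma> C) \<subseteq> perm_code \<sigma> (dual n C)"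
  proof
    fix v assume v: "v \<in> dual n (perm_code \<sigma> C)"
    define w where "w = v \<circ> inv \<sigma>"
    have "v \<in> vecs n" using v by (simp add: dual_def)
    from perm_vecs[OF si this] have wv: "w \<in> vecs n" by (simp add: w_def)
    have "inner n u w = 0" if "u \<in> C" for u
      using v that perm_inner[OF s, of u v] by (auto simp: dual_def perm_code_def w_def)
    then have "w \<in> dual n C" using wv by (simp add: dual_def)
    moreover have "v = w \<circ> \<sigma>" using permutes_inv_o(2)[OF s] by (simp add: w_def comp_assoc)
    ultimately show "v \<in> perm_code \<sigma> (dual n C)" unfolding perm_code_def by blast
  qed
  show "perm_code \<sigma> (dual n C) \<subseteq> dual n (perm_code \<sigma> C)"
  proof
    fix v assume "v \<in> perm_code \<sigma> (dual n C)"
    then obtain w where w: "w \<in> dual n C" "v = w \<circ> \<sigma>" by (auto simp: perm_code_def)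
    have "w \<in> vecs n" using w(1) by (simp add: dual_def)
    from perm_vecs[OF s this] have vv: "v \<in> vecs n" using w(2) by simp
    have "inner n u' v = 0" if hu': "u' \<in> perm_code \<sigma> C" for u'
    proof -
      obtain u where u: "u \<in> C" "u' = u \<circ> \<sigma>" using hu' unfolding perm_code_def by blast
      have "inner n u' v = inner n u (v \<circ> inv \<sigma>)" using perm_inner[OF s] u by simp
      also have "v \<circ> inv \<sigma> = w" using w permutes_inv_o(1)[OF s] by (simp add: o_assoc[symmetric])
      finally have "inner n u' v = inner n u w" .
      moreover have "inner n u w = 0" using w(1) u(1) by (simp add: dual_def)
      ultimately show ?thesis by simp
    qed
    then show "v \<in> dual n (perm_code \<sigma> C)" using vv by (simp add: dual_def)
  qed
qed

theorem mainTheorem2: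
  fixes \<chi> :: "'r::{finite,comm_ring_1} \<Rightarrow> complex"
    and n :: nat
    and C D :: "(nat \<Rightarrow> 'r) set"
    and dC dD :: bool
  assumes "is_Zk_char \<chi> \<or> is_Fq_char \<chi>"
    and "linear_code n C"
    and "linear_code n D"
  shows "\<forall>x. CJav n (if dC then dual n C else C) (if dD then dual n D else D) x =
           (1 / of_nat (card C ^ delta dC * card D ^ delta dD)) *
           CJav n C D (tsubst (T_pow \<chi> dC) (T_pow \<chi> dD) x)"
proof
  fix x
  have ac: "addchar \<chi>" using assms(1) zk_addchar fq_addchar by blast
  note C = assms(2) and D = assms(3)
  let ?N = "of_nat (card C ^ delta dC * card D ^ delta dD) :: complex"
  let ?D' = "if dD then dual n D else D"
  let ?x' = "tsubst (T_pow \<chi> dC) (T_pow \<chi> dD) x"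
  have Nnz: "?N \<noteq> 0" using code_card_pos[OF C] code_card_pos[OF D] by simp
  have each: "CJE n (perm_code \<sigma> (if dC then dual n C else C)) ?D' x =
      (1 / ?N) * CJE n (perm_code \<sigma> C) D ?x'" if s: "\<sigma> permutes {..<n}" for \<sigma>
  proof -
    have t: "perm_code \<sigma> (if dC then dual n C else C) =
        (if dC then dual n (perm_code \<sigma> C) else perm_code \<sigma> C)"
      using perm_dual[OF s, of C] by simp
    have "CJE n (perm_code \<sigma> C) D ?x' =
       of_nat (card (perm_code \<sigma> C) ^ delta dC * card D ^ delta dD) *
       CJE n (if dC then dual n (perm_code \<sigma> C) else perm_code \<sigma> C) ?D' x"
      by (rule addchar.macwilliams[OF ac perm_lc[OF s C] D])
    then have "CJE n (perm_code \<sigma> C) D ?x' = ?N * CJE n (perm_code \<sigma> (if dC then dual n C else C)) ?D' x"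
      by (simp only: perm_card[OF s] t)
    then show ?thesis using Nnz by simp
  qed
  have "CJav n (if dC then dual n C else C) ?D' x =
      (1 / of_nat (fact n)) * (\<Sum>\<sigma>\<in>{\<sigma>. \<sigma> permutes {..<n}}. (1 / ?N) * CJE n (perm_code \<sigma> C) D ?x')"
    unfolding CJav_def by (intro arg_cong[where f = "\<lambda>z. (1 / of_nat (fact n)) * z"] sum.cong refl) (simp add: each)
  also have "\<dots> = (1 / ?N) * CJav n C D ?x'"
    unfolding CJav_def by (simp add: sum_distrib_left mult_ac)
  finally show "CJav n (if dC then dual n C else C) ?D' x = (1 / ?N) * CJav n C D ?x'" .
qed


end
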